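(* Let $n\geq2$ be even, $M\geq3$, and $0<\beta\leq n$. Suppose that $\beta\equiv \frac{Mn}{2}\pmod 2$, and that if $Mn\equiv 2\pmod 4$ and $n>2$ then $\beta\neq1$. Then $(n-\beta,\beta)\in\mathrm{HWP}(C_M[n];M,Mn)$.
   Context: $C_M[n]$ denotes the lexicographic product of the $M$-cycle with the empty graph on $n$ vertices: vertex set $\mathbb Z_M\times\mathbb Z_n$, with $(i,x)(j,y)$ an edge iff $j-i\equiv\pm1\pmod M$. A $C_k$-factor of a graph $G$ is a spanning subgraph of $G$ all of whose components are cycles of length $k$. For a graph $G$ and integers $M,N\ge3$, $\mathrm{HWP}(G;M,N)$ is the set of pairs $(\alpha,\beta)$ of nonnegative integers such that $G$ admits a set of $\alpha$ $C_M$-factors and $\beta$ $C_N$-factors whose edge sets partition $E(G)$. *)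

theory Defs
  imports Main
begin

text \<open>Undirected simple graphs are given by a vertex set V and a set E of
  2-element vertex sets (edges).\<close>

definition cycle_edges :: "'a list \<Rightarrow> 'a set set" where
  "cycle_edges vs = {{vs ! i, vs ! ((i + 1) mod length vs)} | i. i < length vs}"

definition is_cycle :: "nat \<Rightarrow> 'a set set \<Rightarrow> bool" where
  "is_cycle k C \<longleftrightarrow> k \<ge> 3 \<and> (\<exists>vs. length vs = k \<and> distinct vs \<and> C = cycle_edges vs)"

definition is_Ck_factor :: "nat \<Rightarrow> 'a set \<Rightarrow> 'a set set \<Rightarrow> 'a set set \<Rightarrow> bool" where
  "is_Ck_factor k V E F \<longleftrightarrow> F \<subseteq> E \<and>
     (\<exists>\<C>. (\<forall>C\<in>\<C>. is_cycle k C) \<and> \<Union>\<C> = F \<and>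
          (\<forall>C\<in>\<C>. \<forall>D\<in>\<C>. C \<noteq> D \<longrightarrow> \<Union>C \<inter> \<Union>D = {}) \<and>
          \<Union>F = V)"

definition HWP :: "'a set \<Rightarrow> 'a set set \<Rightarrow> nat \<Rightarrow> nat \<Rightarrow> (nat \<times> nat) set" where
  "HWP V E M N = {(\<alpha>, \<beta>). \<exists>F :: nat \<Rightarrow> 'a set set.
      (\<forall>i<\<alpha>. is_Ck_factor M V E (F i)) \<and>
      (\<forall>i. \<alpha> \<le> i \<and> i < \<alpha> + \<beta> \<longrightarrow> is_Ck_factor N V E (F i)) \<and>
      (\<forall>i<\<alpha> + \<beta>. \<forall>j<\<alpha> + \<beta>. i \<noteq> j \<longrightarrow> F i \<inter> F j = {}) \<and>
      (\<Union>i<\<alpha> + \<beta>. F i) = E}"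

text \<open>C_M[n] = lexicographic product of the M-cycle with the empty graph on n
  vertices; vertex (i,x) with i in Z_M (represented by 0..M-1), x in Z_n.\<close>
definition lexV :: "nat \<Rightarrow> nat \<Rightarrow> (nat \<times> nat) set" where
  "lexV M n = {0..<M} \<times> {0..<n}"

definition lexE :: "nat \<Rightarrow> nat \<Rightarrow> (nat \<times> nat) set set" where
  "lexE M n = {{(i, x), (j, y)} | i x j y. i < M \<and> j < M \<and> x < n \<and> y < n \<and>
                 ((j + M - i) mod M = 1 \<or> (i + M - j) mod M = 1)}"

end

theory Submission
  imports Defs "HOL-Number_Theory.Cong"
begin



lemma cyc_lemma:
  fixes w :: "nat \<Rightarrow> 'a" and nb :: "'a \<Rightarrow> 'a"
  assumes L3: "L \<ge> 3" and step: "\<And>t. w (Suc t) = nb (w t)" and per: "w L = w 0"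
    and inj: "inj_on w {0..<L}"
  shows "is_cycle L (cycle_edges (map w [0..<L]))"
    and "cycle_edges (map w [0..<L]) = (\<lambda>t. {w t, nb (w t)}) ` {0..<L}"
    and "\<Union>(cycle_edges (map w [0..<L])) = w ` {0..<L}"
proof -
  have nx: "map w [0..<L] ! ((i + 1) mod L) = nb (w i)" if "i < L" for i
  proof (cases "i + 1 < L")
    case True thus ?thesis using step by simp
  next
    case False
    hence "i + 1 = L" using that by simp
    thus ?thesis using L3 step[of i] per by simp
  qed
  have ce: "cycle_edges (map w [0..<L]) = (\<lambda>t. {w t, nb (w t)}) ` {0..<L}"
    unfolding cycle_edges_def using nx by force
  show "cycle_edges (map w [0..<L]) = (\<lambda>t. {w t, nb (w t)}) ` {0..<L}" by (rule ce)
  show "is_cycle L (cycle_edges (map w [0..<L]))"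
    unfolding is_cycle_def using L3 inj
    by (intro conjI exI[of _ "map w [0..<L]"]) (auto simp: distinct_map)
  show "\<Union>(cycle_edges (map w [0..<L])) = w ` {0..<L}"
  proof
    show "\<Union>(cycle_edges (map w [0..<L])) \<subseteq> w ` {0..<L}"
    proof
      fix v assume "v \<in> \<Union>(cycle_edges (map w [0..<L]))"
      then obtain t where t: "t < L" "v = w t \<or> v = nb (w t)" using ce by auto
      show "v \<in> w ` {0..<L}"
      proof (cases "v = w t")
        case True thus ?thesis using t by auto
      next
        case False
        hence v: "v = w (Suc t)" using t step by auto
        show ?thesis
        proof (cases "Suc t < L")
          case True thus ?thesis using v by auto
        next
          case False hence "Suc t = L" using t by simp
          thus ?thesis using v per L3 by force
        qed
      qed
    qed
    show "w ` {0..<L} \<subseteq> \<Union>(cycle_edges (map w [0..<L]))" using ce by auto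
  qed
qed

definition nbr :: "nat \<Rightarrow> nat \<Rightarrow> (nat \<Rightarrow> nat) \<Rightarrow> nat \<times> nat \<Rightarrow> nat \<times> nat" where
  "nbr M n dd v = (Suc (fst v) mod M, (snd v + dd (fst v)) mod n)"

definition Fac :: "nat \<Rightarrow> nat \<Rightarrow> (nat \<Rightarrow> nat) \<Rightarrow> (nat \<times> nat) set set" where
  "Fac M n dd = (\<lambda>v. {v, nbr M n dd v}) ` ({0..<M} \<times> {0..<n})"

definition psum :: "(nat \<Rightarrow> nat) \<Rightarrow> nat \<Rightarrow> nat" where
  "psum dd i = (\<Sum>k<i. dd k)"

definition walk :: "nat \<Rightarrow> nat \<Rightarrow> (nat \<Rightarrow> nat) \<Rightarrow> nat \<Rightarrow> nat \<Rightarrow> nat \<times> nat" where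
  "walk M n dd x t = (t mod M, (x + (t div M) * psum dd M + psum dd (t mod M)) mod n)"

lemma walk_step:
  assumes "M > 0"
  shows "walk M n dd x (Suc t) = nbr M n dd (walk M n dd x t)"
proof (cases "Suc (t mod M) < M")
  case True
  hence a: "Suc t mod M = Suc (t mod M)" by (simp add: mod_Suc)
  have b: "Suc t div M = t div M" using True assms a by (simp add: div_Suc)
  show ?thesis unfolding walk_def nbr_def using a b True
    by (simp add: psum_def mod_add_left_eq add.assoc)
next
  case False
  hence c: "Suc (t mod M) = M" using assms by (meson Suc_lessI mod_less_divisor)
  hence a: "Suc t mod M = 0" by (simp add: mod_Suc)
  have b: "Suc t div M = Suc (t div M)" using a by (simp add: div_Suc)
  have p: "psum dd M = psum dd (t mod M) + dd (t mod M)"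
    using c unfolding psum_def by (metis sum.lessThan_Suc)
  have e: "x + Suc (t div M) * psum dd M + psum dd 0 = x + t div M * psum dd M + psum dd (t mod M) + dd (t mod M)"
    using p by (simp add: psum_def algebra_simps)
  show ?thesis unfolding walk_def nbr_def using a b c 
    by (simp only: e fst_conv snd_conv mod_add_left_eq mod_self)
qed

lemma inj_surj_nat:
  fixes f :: "nat \<Rightarrow> nat"
  assumes "inj_on f {0..<n}" "\<forall>x<n. f x < n" "y < n"
  shows "\<exists>x<n. f x = y"
proof -
  have "f ` {0..<n} = {0..<n}" using assms by (intro endo_inj_surj) (auto simp: image_subset_iff)
  thus ?thesis using assms(3) by (metis atLeastLessThan_iff imageE zero_le)
qed

lemma mod_add_cancel_lt:
  fixes x x' c n :: nat
  assumes "(x + c) mod n = (x' + c) mod n" "x < n" "x' < n"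
  shows "x = x'"
proof -
  have "[x + c = x' + c] (mod n)" using assms(1) by (simp add: cong_def)
  hence "[x = x'] (mod n)" by (simp add: cong_add_rcancel_nat)
  thus ?thesis using assms by (simp add: cong_def)
qed

lemma walk_in:
  assumes "M > 0" "n > 0"
  shows "walk M n dd x t \<in> {0..<M} \<times> {0..<n}"
  using assms by (simp add: walk_def)

lemma nbr_in:
  assumes "M > 0" "n > 0"
  shows "nbr M n dd v \<in> {0..<M} \<times> {0..<n}"
  using assms by (simp add: nbr_def)

lemma Fac_Union:
  assumes "M > 0" "n > 0"
  shows "\<Union>(Fac M n dd) = {0..<M} \<times> {0..<n}"
  using nbr_in[OF assms] unfolding Fac_def by blast

lemma Fac_sub_E:
  assumes "M \<ge> 3"
  shows "Fac M n dd \<subseteq> lexE M n"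
proof
  fix e assume "e \<in> Fac M n dd"
  then obtain i y where iy: "i < M" "y < n" "e = {(i,y), nbr M n dd (i,y)}"
    unfolding Fac_def by auto
  have r: "(Suc i mod M + M - i) mod M = 1"
  proof (cases "Suc i < M")
    case True thus ?thesis using assms by (simp add: mod_Suc)
  next
    case False hence "Suc i = M" using iy by simp
    thus ?thesis using assms by simp
  qed
  have "{(i,y), (Suc i mod M, (y + dd i) mod n)} \<in> lexE M n" unfolding lexE_def
    apply (rule CollectI)
    apply (rule exI[of _ i], rule exI[of _ y], rule exI[of _ "Suc i mod M"], rule exI[of _ "(y + dd i) mod n"])
    using iy r assms by simp
  thus "e \<in> lexE M n" unfolding iy(3) nbr_def by simp
qed


lemma zero_factor:
  assumes M3: "M \<ge> 3" and n0: "n > 0" and P: "psum dd M mod n = 0"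
  shows "is_Ck_factor M (lexV M n) (lexE M n) (Fac M n dd)"
proof -
  define w where "w x = walk M n dd x" for x
  have M0: "M > 0" using M3 by simp
  have step: "w x (Suc t) = nbr M n dd (w x t)" for x t
    unfolding w_def using walk_step[OF M0] by simp
  have per: "w x M = w x 0" for x
  proof -
    have 1: "(x + psum dd M) mod n = x mod n" by (metis P add.right_neutral mod_add_right_eq)
    have 2: "walk M n dd x M = (0, (x + psum dd M) mod n)" using M0 by (simp add: walk_def psum_def)
    have 3: "walk M n dd x 0 = (0, x mod n)" by (simp add: walk_def psum_def)
    show ?thesis unfolding w_def 2 3 1 ..
  qed
  have inj: "inj_on (w x) {0..<M}" for x
    by (auto simp: inj_on_def w_def walk_def)
  note cl = cyc_lemma[OF M3 step per inj]
  define CC where "CC = (\<lambda>x. cycle_edges (map (w x) [0..<M])) ` {0..<n}"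
  have wi: "w x t = (t, (x + psum dd t) mod n)" if "t < M" for x t
    using that unfolding w_def walk_def by simp
  have U: "\<Union>CC = Fac M n dd"
  proof
    show "\<Union>CC \<subseteq> Fac M n dd"
    proof
      fix e assume "e \<in> \<Union>CC"
      then obtain x where "e \<in> cycle_edges (map (w x) [0..<M])"
        unfolding CC_def by blast
      then obtain t where t: "t \<in> {0..<M}" "e = {w x t, nbr M n dd (w x t)}"
        unfolding cl(2) by (rule imageE)
      have "w x t \<in> {0..<M} \<times> {0..<n}" unfolding w_def by (rule walk_in[OF M0 n0])
      thus "e \<in> Fac M n dd" unfolding Fac_def t(2) by (rule imageI)
    qed
    show "Fac M n dd \<subseteq> \<Union>CC"
    proof
      fix e assume "e \<in> Fac M n dd"
      then obtain v where v: "v \<in> {0..<M} \<times> {0..<n}" "e = {v, nbr M n dd v}"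
        unfolding Fac_def by (rule imageE)
      obtain i y where iy: "i < M" "y < n" "v = (i,y)" using v(1) by (cases v) auto
      have "inj_on (\<lambda>x. (x + psum dd i) mod n) {0..<n}"
      proof (rule inj_onI)
        fix a b assume "a \<in> {0..<n}" "b \<in> {0..<n}" "(a + psum dd i) mod n = (b + psum dd i) mod n"
        thus "a = b" using mod_add_cancel_lt[of a "psum dd i" n b] by auto
      qed
      then obtain x where x: "x < n" "(x + psum dd i) mod n = y"
        using inj_surj_nat[of "\<lambda>x. (x + psum dd i) mod n" n y] iy(2) n0 by auto
      have wx: "w x i = v" using wi[OF iy(1)] x iy by simp
      have "e \<in> cycle_edges (map (w x) [0..<M])" unfolding cl(2) v(2) wx[symmetric]
        using iy(1) by (intro imageI) simp
      moreover have "cycle_edges (map (w x) [0..<M]) \<in> CC" unfolding CC_def using x(1) by simp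
      ultimately show "e \<in> \<Union>CC" by (rule UnionI[rotated])
    qed
  qed
  have D: "\<Union>C \<inter> \<Union>D = {}" if CD: "C \<in> CC" "D \<in> CC" "C \<noteq> D" for C D
  proof -
    obtain x where x: "x < n" "C = cycle_edges (map (w x) [0..<M])" using CD(1) CC_def by auto
    obtain x' where x': "x' < n" "D = cycle_edges (map (w x') [0..<M])" using CD(2) CC_def by auto
    have "x \<noteq> x'" using x x' CD(3) by auto
    show ?thesis unfolding x x' cl(3)
    proof (rule ccontr)
      assume "w x ` {0..<M} \<inter> w x' ` {0..<M} \<noteq> {}"
      then obtain v where "v \<in> w x ` {0..<M}" "v \<in> w x' ` {0..<M}" by blast
      then obtain t t' where tt: "t < M" "t' < M" "w x t = w x' t'" by force
      hence "t = t'" "(x + psum dd t) mod n = (x' + psum dd t) mod n" using wi[OF tt(1)] wi[OF tt(2)] by auto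
      hence "x = x'" using mod_add_cancel_lt x x' by blast
      thus False using \<open>x \<noteq> x'\<close> by simp
    qed
  qed
  show ?thesis unfolding is_Ck_factor_def lexV_def
  proof (intro conjI exI[of _ CC])
    show "Fac M n dd \<subseteq> lexE M n" by (rule Fac_sub_E[OF M3])
    show "\<forall>C\<in>CC. is_cycle M C" using cl(1) CC_def by auto
    show "\<Union>CC = Fac M n dd" by (rule U)
    show "\<forall>C\<in>CC. \<forall>D\<in>CC. C \<noteq> D \<longrightarrow> \<Union>C \<inter> \<Union>D = {}" using D by blast
    show "\<Union>(Fac M n dd) = {0..<M} \<times> {0..<n}" by (rule Fac_Union[OF M0 n0])
  qed
qed

lemma unit_factor:
  assumes M3: "M \<ge> 3" and n0: "n > 0" and P: "coprime (psum dd M) n"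
  shows "is_Ck_factor (M * n) (lexV M n) (lexE M n) (Fac M n dd)"
proof -
  define w where "w = walk M n dd 0"
  define L where "L = M * n"
  have M0: "M > 0" using M3 by simp
  have "M * 1 \<le> M * n" using n0 by (intro mult_le_mono2) simp
  hence L3: "L \<ge> 3" unfolding L_def using M3 by linarith
  have step: "w (Suc t) = nbr M n dd (w t)" for t
    unfolding w_def using walk_step[OF M0] by simp
  have per: "w L = w 0"
    using M0 unfolding w_def walk_def L_def psum_def by simp
  have wq: "w (q * M + i) = (i, (q * psum dd M + psum dd i) mod n)" if "i < M" for q i
    using that unfolding w_def walk_def by simp
  have injq: "inj_on (\<lambda>q. (q * psum dd M + c) mod n) {0..<n}" for c
  proof (rule inj_onI)
    fix a b assume ab: "a \<in> {0..<n}" "b \<in> {0..<n}" "(a * psum dd M + c) mod n = (b * psum dd M + c) mod n"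
    hence "[a * psum dd M + c = b * psum dd M + c] (mod n)" by (simp add: cong_def)
    hence "[a * psum dd M = b * psum dd M] (mod n)" by (simp add: cong_add_rcancel_nat)
    hence "[a = b] (mod n)" using P by (simp add: cong_mult_rcancel_nat)
    thus "a = b" using ab by (simp add: cong_def)
  qed
  have inj: "inj_on w {0..<L}"
  proof (rule inj_onI)
    fix t t' assume tt: "t \<in> {0..<L}" "t' \<in> {0..<L}" "w t = w t'"
    have q: "t div M < n" "t' div M < n" using tt(1,2) unfolding L_def
      by (simp_all add: less_mult_imp_div_less mult.commute)
    have i: "t mod M < M" "t' mod M < M" using M0 by simp_all
    have a1: "w t = (t mod M, (t div M * psum dd M + psum dd (t mod M)) mod n)"
      using wq[OF i(1), of "t div M"] by (simp only: div_mult_mod_eq)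
    have a2: "w t' = (t' mod M, (t' div M * psum dd M + psum dd (t' mod M)) mod n)"
      using wq[OF i(2), of "t' div M"] by (simp only: div_mult_mod_eq)
    have "t mod M = t' mod M \<and> (t div M * psum dd M + psum dd (t mod M)) mod n = (t' div M * psum dd M + psum dd (t' mod M)) mod n"
      using tt(3) unfolding a1 a2 prod.inject by assumption
    hence m: "t mod M = t' mod M"
      and m2': "(t div M * psum dd M + psum dd (t mod M)) mod n = (t' div M * psum dd M + psum dd (t' mod M)) mod n"
      by blast+
    have m2: "(t div M * psum dd M + psum dd (t mod M)) mod n = (t' div M * psum dd M + psum dd (t mod M)) mod n"
      using m2' unfolding m .
    have "t div M = t' div M" using inj_onD[OF injq m2] q by simp
    thus "t = t'" using m by (metis div_mult_mod_eq)
  qed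
  note cl = cyc_lemma[OF L3 step per inj]
  define CC where "CC = {cycle_edges (map w [0..<L])}"
  have U: "\<Union>CC = Fac M n dd"
  proof
    show "\<Union>CC \<subseteq> Fac M n dd"
    proof
      fix e assume "e \<in> \<Union>CC"
      hence "e \<in> cycle_edges (map w [0..<L])" unfolding CC_def by simp
      then obtain t where t: "t \<in> {0..<L}" "e = {w t, nbr M n dd (w t)}"
        unfolding cl(2) by (rule imageE)
      have "w t \<in> {0..<M} \<times> {0..<n}" unfolding w_def by (rule walk_in[OF M0 n0])
      thus "e \<in> Fac M n dd" unfolding Fac_def t(2) by (rule imageI)
    qed
    show "Fac M n dd \<subseteq> \<Union>CC"
    proof
      fix e assume "e \<in> Fac M n dd"
      then obtain v where v: "v \<in> {0..<M} \<times> {0..<n}" "e = {v, nbr M n dd v}"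
        unfolding Fac_def by (rule imageE)
      obtain i y where iy: "i < M" "y < n" "v = (i,y)" using v(1) by (cases v) auto
      obtain q where q: "q < n" "(q * psum dd M + psum dd i) mod n = y"
        using inj_surj_nat[of "\<lambda>q. (q * psum dd M + psum dd i) mod n" n y] injq iy(2) n0 by auto
      have wx: "w (q * M + i) = v" using wq[OF iy(1)] q iy by simp
      have "Suc q * M \<le> n * M" using q(1) by (intro mult_le_mono1) simp
      hence lt: "q * M + i < L" unfolding L_def using iy(1) by (simp add: mult.commute)
      have "e \<in> cycle_edges (map w [0..<L])" unfolding cl(2) v(2) wx[symmetric]
        using lt by (intro imageI) simp
      thus "e \<in> \<Union>CC" unfolding CC_def by simp
    qed
  qed
  show ?thesis unfolding is_Ck_factor_def lexV_def
  proof (intro conjI exI[of _ CC])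
    show "Fac M n dd \<subseteq> lexE M n" by (rule Fac_sub_E[OF M3])
    show "\<forall>C\<in>CC. is_cycle (M * n) C" using cl(1) CC_def L_def by auto
    show "\<Union>CC = Fac M n dd" by (rule U)
    show "\<forall>C\<in>CC. \<forall>D\<in>CC. C \<noteq> D \<longrightarrow> \<Union>C \<inter> \<Union>D = {}" unfolding CC_def by blast
    show "\<Union>(Fac M n dd) = {0..<M} \<times> {0..<n}" by (rule Fac_Union[OF M0 n0])
  qed
qed


lemma suc_mod_two_contra:
  fixes i j M :: nat
  assumes M3: "M \<ge> 3" and im: "i < M" and jm: "j < M" and a4: "i = Suc j mod M" and a5: "j = Suc i mod M"
  shows False
proof (cases "Suc j < M")
  case True
  have "Suc j mod M = Suc j" using True by (rule mod_less)
  hence i: "i = Suc j" using a4 by linarith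
  show False
  proof (cases "Suc i < M")
    case True
    have "Suc i mod M = Suc i" using True by (rule mod_less)
    hence "j = Suc i" using a5 by linarith
    thus False using i by linarith
  next
    case False hence si: "Suc i = M" using im by linarith
    hence "Suc i mod M = 0" by simp
    hence "j = 0" using a5 by linarith
    thus False using i si M3 by linarith
  qed
next
  case False hence sj: "Suc j = M" using jm by linarith
  hence "Suc j mod M = 0" by simp
  hence "i = 0" using a4 by linarith
  moreover have "Suc 0 mod M = 1" using M3 by simp
  ultimately have "j = 1" using a5 by simp
  thus False using sj M3 by linarith
qed

lemma mod_diff_one:
  fixes i j M :: nat
  assumes "M \<ge> 3" "i < M" "j < M" "(j + M - i) mod M = 1"
  shows "j = Suc i mod M"
proof (cases "i < j")
  case True
  hence "j + M - i = (j - i) + M" by simp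
  hence "(j - i) mod M = 1" using assms(4) by simp
  hence "j - i = 1" using assms(3) by simp
  hence "j = Suc i" using True by simp
  thus ?thesis using assms(3) by simp
next
  case False
  show ?thesis
  proof (cases "i = j")
    case True thus ?thesis using assms by simp
  next
    case False2: False
    hence lt: "j + M - i < M" using False assms(2) by linarith
    hence "j + M - i = 1" using assms(4) by simp
    hence "j = 0" "Suc i = M" using assms(2) False2 False by linarith+
    thus ?thesis by simp
  qed
qed




lemma Fac_disj:
  assumes M3: "M \<ge> 3" and r: "r < n" and s: "s < n" and rs: "r \<noteq> s"
    and dlt: "\<forall>r<n. \<forall>i<M. d r i < n"
    and dinj: "\<forall>i<M. inj_on (\<lambda>r. d r i) {0..<n}"
  shows "Fac M n (d r) \<inter> Fac M n (d s) = {}"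
proof (rule ccontr)
  assume "Fac M n (d r) \<inter> Fac M n (d s) \<noteq> {}"
  then obtain e where e1: "e \<in> Fac M n (d r)" and e2: "e \<in> Fac M n (d s)" by blast
  from e1 obtain v where v: "v \<in> {0..<M} \<times> {0..<n}" "e = {v, nbr M n (d r) v}"
    unfolding Fac_def by (rule imageE)
  from e2 obtain v' where v': "v' \<in> {0..<M} \<times> {0..<n}" "e = {v', nbr M n (d s) v'}"
    unfolding Fac_def by (rule imageE)
  obtain i y where iy: "i < M" "y < n" "v = (i,y)" using v(1) by (cases v) auto
  obtain i' y' where iy': "i' < M" "y' < n" "v' = (i',y')" using v'(1) by (cases v') auto
  have "{v, nbr M n (d r) v} = {v', nbr M n (d s) v'}" using v(2) v'(2) by simp
  hence "(v = v' \<and> nbr M n (d r) v = nbr M n (d s) v') \<or> (v = nbr M n (d s) v' \<and> nbr M n (d r) v = v')"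
    by (rule doubleton_eq_iff[THEN iffD1])
  thus False
  proof
    assume a: "v = v' \<and> nbr M n (d r) v = nbr M n (d s) v'"
    hence "(y + d r i) mod n = (y + d s i) mod n" using iy iy' unfolding nbr_def by auto
    hence "(d r i + y) mod n = (d s i + y) mod n" by (simp add: add.commute)
    hence "d r i = d s i" using mod_add_cancel_lt dlt r s iy(1) by blast
    hence "r = s" using dinj iy(1) r s unfolding inj_on_def by simp
    thus False using rs by simp
  next
    assume a: "v = nbr M n (d s) v' \<and> nbr M n (d r) v = v'"
    have a1: "(i,y) = nbr M n (d s) (i',y')" using a unfolding iy(3) iy'(3) by (rule conjunct1)
    have a2: "nbr M n (d r) (i,y) = (i',y')" using a unfolding iy(3) iy'(3) by (rule conjunct2)
    have "fst (i,y) = fst (nbr M n (d s) (i',y'))" using a1 by (rule arg_cong)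
    hence "i = Suc i' mod M" by (simp add: nbr_def)
    moreover have "fst (nbr M n (d r) (i,y)) = fst (i',y')" using a2 by (rule arg_cong)
    hence "i' = Suc i mod M" by (simp add: nbr_def)
    ultimately show False using suc_mod_two_contra M3 iy(1) iy'(1) by blast
  qed
qed

lemma Fac_cover:
  assumes M3: "M \<ge> 3" and n0: "n > 0"
    and dlt: "\<forall>r<n. \<forall>i<M. d r i < n"
    and dinj: "\<forall>i<M. inj_on (\<lambda>r. d r i) {0..<n}"
    and e: "e \<in> lexE M n"
  shows "\<exists>r<n. e \<in> Fac M n (d r)"
proof -
  have key: "\<exists>r<n. {(i,x), (j,y)} \<in> Fac M n (d r)"
    if ij: "i < M" "j < M" "x < n" "y < n" "(j + M - i) mod M = 1" for i j x y
  proof -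
    have j: "j = Suc i mod M" using mod_diff_one[OF M3 ij(1,2,5)] .
    have "inj_on (\<lambda>r. (x + d r i) mod n) {0..<n}"
    proof (rule inj_onI)
      fix a b assume ab: "a \<in> {0..<n}" "b \<in> {0..<n}" "(x + d a i) mod n = (x + d b i) mod n"
      hence "(d a i + x) mod n = (d b i + x) mod n" by (simp add: add.commute)
      moreover have "d a i < n" "d b i < n" using dlt ab(1,2) ij(1) by simp_all
      ultimately have "d a i = d b i" by (rule mod_add_cancel_lt)
      thus "a = b" using dinj ij(1) ab(1,2) unfolding inj_on_def by simp
    qed
    then obtain r where r: "r < n" "(x + d r i) mod n = y"
      using inj_surj_nat[of "\<lambda>r. (x + d r i) mod n" n y] ij(4) n0 by auto
    have "nbr M n (d r) (i, x) = (j, y)" unfolding nbr_def using j r by simp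
    hence "{(i,x), (j,y)} = (\<lambda>v. {v, nbr M n (d r) v}) (i,x)" by simp
    moreover have "(i,x) \<in> {0..<M} \<times> {0..<n}" using ij by simp
    ultimately have "{(i,x), (j,y)} \<in> Fac M n (d r)" unfolding Fac_def by (rule image_eqI)
    thus ?thesis using r(1) by blast
  qed
  from e have "\<exists>i x j y. e = {(i, x), (j, y)} \<and> i < M \<and> j < M \<and> x < n \<and> y < n \<and>
      ((j + M - i) mod M = 1 \<or> (i + M - j) mod M = 1)"
    unfolding lexE_def by (simp only: mem_Collect_eq)
  then obtain i x j y where exy: "e = {(i, x), (j, y)}" "i < M" "j < M" "x < n" "y < n"
      "(j + M - i) mod M = 1 \<or> (i + M - j) mod M = 1"
    by (elim exE conjE) simp
  show ?thesis
  proof (cases "(j + M - i) mod M = 1")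
    case True thus ?thesis using key[of i j x y] exy by simp
  next
    case False
    hence "(i + M - j) mod M = 1" using exy(6) by simp
    hence "\<exists>r<n. {(j,y), (i,x)} \<in> Fac M n (d r)" using key[of j i y x] exy by simp
    thus ?thesis using exy(1) by (simp add: insert_commute)
  qed
qed



lemma array_HWP:
  fixes d :: "nat \<Rightarrow> nat \<Rightarrow> nat" and U :: "nat set"
  assumes M3: "M \<ge> 3" and n0: "n > 0"
    and dlt: "\<forall>r<n. \<forall>i<M. d r i < n"
    and dinj: "\<forall>i<M. inj_on (\<lambda>r. d r i) {0..<n}"
    and Usub: "U \<subseteq> {0..<n}" and cU: "card U = \<beta>"
    and Uunit: "\<forall>r\<in>U. coprime (psum (d r) M) n"
    and Zzero: "\<forall>r<n. r \<notin> U \<longrightarrow> psum (d r) M mod n = 0"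
  shows "(n - \<beta>, \<beta>) \<in> HWP (lexV M n) (lexE M n) M (M * n)"
proof -
  define Z where "Z = {0..<n} - U"
  have fU: "finite U" using Usub finite_subset by blast
  have bn: "\<beta> \<le> n" using card_mono[OF _ Usub] cU by simp
  have cZ: "card Z = n - \<beta>" unfolding Z_def using card_Diff_subset[OF fU Usub] cU by simp
  obtain f1 where f1: "bij_betw f1 {0..<n - \<beta>} Z"
    using ex_bij_betw_nat_finite[of Z] cZ unfolding Z_def by auto
  obtain f2 where f2: "bij_betw f2 {0..<\<beta>} U"
    using ex_bij_betw_nat_finite[OF fU] cU by auto
  define g where "g i = (if i < n - \<beta> then f1 i else f2 (i - (n - \<beta>)))" for i
  have gZ: "g i \<in> Z" if "i < n - \<beta>" for i
    using that f1 unfolding g_def bij_betw_def by auto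
  have gU: "g i \<in> U" if "n - \<beta> \<le> i" "i < n" for i
  proof -
    have "i - (n - \<beta>) < \<beta>" using that bn by arith
    thus ?thesis using that f2 unfolding g_def bij_betw_def by auto
  qed
  have gn: "g i < n" if "i < n" for i
  proof (cases "i < n - \<beta>")
    case True thus ?thesis using gZ Z_def by auto
  next
    case False
    hence "g i \<in> U" using gU that by simp
    thus ?thesis using Usub by auto
  qed
  have ginj: "g i \<noteq> g j" if "i < n" "j < n" "i \<noteq> j" for i j
  proof (cases "i < n - \<beta>")
    case True
    show ?thesis
    proof (cases "j < n - \<beta>")
      case True2: True
      have "f1 i \<noteq> f1 j" using f1 True True2 that(3) unfolding bij_betw_def inj_on_def by auto
      thus ?thesis unfolding g_def using True True2 by simp
    next
      case False
      thus ?thesis using gZ[OF True] gU[of j] that Z_def by auto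
    qed
  next
    case False
    show ?thesis
    proof (cases "j < n - \<beta>")
      case True2: True
      thus ?thesis using gZ[OF True2] gU[of i] that Z_def False by auto
    next
      case False2: False
      have a1: "i - (n - \<beta>) < \<beta>" using that bn False by arith
      have a2: "j - (n - \<beta>) < \<beta>" using that bn False2 by arith
      note a = a1 a2
      have "i - (n - \<beta>) \<noteq> j - (n - \<beta>)" using False False2 that(3) by linarith
      hence "f2 (i - (n - \<beta>)) \<noteq> f2 (j - (n - \<beta>))" using f2 a unfolding bij_betw_def inj_on_def by auto
      thus ?thesis unfolding g_def using False False2 by simp
    qed
  qed
  have gsurj: "\<exists>i<n. g i = r" if "r < n" for r
  proof (cases "r \<in> U")
    case True
    then obtain k where k: "k < \<beta>" "f2 k = r" using f2 unfolding bij_betw_def by auto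
    have "g (k + (n - \<beta>)) = r" unfolding g_def using k by simp
    moreover have "k + (n - \<beta>) < n" using k bn by linarith
    ultimately show ?thesis by blast
  next
    case False
    hence "r \<in> Z" unfolding Z_def using that by simp
    then obtain k where k: "k < n - \<beta>" "f1 k = r" using f1 unfolding bij_betw_def by auto
    have "g k = r" unfolding g_def using k by simp
    moreover have "k < n" using k by linarith
    ultimately show ?thesis by blast
  qed
  define F where "F i = Fac M n (d (g i))" for i
  have nb: "n - \<beta> + \<beta> = n" using bn by simp
  show ?thesis unfolding HWP_def
  proof (rule CollectI, simp only: case_prod_conv, rule exI[of _ F], intro conjI allI impI)
    fix i assume i: "i < n - \<beta>"
    have "g i < n" "g i \<notin> U" using gZ[OF i] Z_def by auto
    hence "psum (d (g i)) M mod n = 0" using Zzero by simp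
    thus "is_Ck_factor M (lexV M n) (lexE M n) (F i)" unfolding F_def
      by (rule zero_factor[OF M3 n0])
  next
    fix i assume i: "n - \<beta> \<le> i \<and> i < n - \<beta> + \<beta>"
    have "g i \<in> U" using gU i nb by simp
    hence "coprime (psum (d (g i)) M) n" using Uunit by simp
    thus "is_Ck_factor (M * n) (lexV M n) (lexE M n) (F i)" unfolding F_def
      by (rule unit_factor[OF M3 n0])
  next
    fix i j assume "i < n - \<beta> + \<beta>" "j < n - \<beta> + \<beta>" "i \<noteq> j"
    hence "i < n" "j < n" "g i \<noteq> g j" using ginj nb by auto
    thus "F i \<inter> F j = {}" unfolding F_def using Fac_disj[OF M3 gn gn _ dlt dinj] by simp
  next
    show "(\<Union>i<n - \<beta> + \<beta>. F i) = lexE M n"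
    proof
      show "(\<Union>i<n - \<beta> + \<beta>. F i) \<subseteq> lexE M n" unfolding F_def using Fac_sub_E[OF M3] by blast
      show "lexE M n \<subseteq> (\<Union>i<n - \<beta> + \<beta>. F i)"
      proof
        fix e assume "e \<in> lexE M n"
        then obtain r where r: "r < n" "e \<in> Fac M n (d r)" using Fac_cover[OF M3 n0 dlt dinj] by blast
        then obtain i where "i < n" "g i = r" using gsurj by blast
        thus "e \<in> (\<Union>i<n - \<beta> + \<beta>. F i)" unfolding F_def nb using r by blast
      qed
    qed
  qed
qed


lemma small_dvd:
  fixes x n :: int
  assumes "n dvd x" "\<bar>x\<bar> < n"
  shows "x = 0"
proof (rule ccontr)
  assume "x \<noteq> 0"
  hence "\<bar>n\<bar> \<le> \<bar>x\<bar>" using dvd_imp_le_int assms(1) by blast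
  thus False using assms(2) by linarith
qed

lemma int_array_HWP:
  fixes D :: "nat \<Rightarrow> nat \<Rightarrow> int" and U :: "nat set"
  assumes M3: "M \<ge> 3" and n0: "n > 0"
    and Dinj: "\<forall>i<M. \<forall>r<n. \<forall>s<n. D r i mod int n = D s i mod int n \<longrightarrow> r = s"
    and Usub: "U \<subseteq> {0..<n}" and cU: "card U = \<beta>"
    and Uunit: "\<forall>r\<in>U. coprime (\<Sum>i<M. D r i) (int n)"
    and Zzero: "\<forall>r<n. r \<notin> U \<longrightarrow> (\<Sum>i<M. D r i) mod int n = 0"
  shows "(n - \<beta>, \<beta>) \<in> HWP (lexV M n) (lexE M n) M (M * n)"
proof -
  define d where "d r i = nat (D r i mod int n)" for r i
  have n0': "int n > 0" using n0 by simp
  have dint: "int (d r i) = D r i mod int n" for r i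
    unfolding d_def using n0' by simp
  have dlt: "\<forall>r<n. \<forall>i<M. d r i < n"
    unfolding d_def using n0' by (simp add: nat_less_iff)
  have dinj: "\<forall>i<M. inj_on (\<lambda>r. d r i) {0..<n}"
  proof (intro allI impI inj_onI)
    fix i r s assume i: "i < M" and rs: "r \<in> {0..<n}" "s \<in> {0..<n}" "d r i = d s i"
    hence "int (d r i) = int (d s i)" by simp
    hence "D r i mod int n = D s i mod int n" unfolding dint .
    thus "r = s" using Dinj i rs by simp
  qed
  have ps: "int (psum (d r) M) mod int n = (\<Sum>i<M. D r i) mod int n" for r
  proof -
    have "int (psum (d r) M) = (\<Sum>i<M. D r i mod int n)" unfolding psum_def
      by (simp add: dint)
    thus ?thesis by (simp add: mod_sum_eq)
  qed
  show ?thesis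
  proof (rule array_HWP[OF M3 n0 dlt dinj Usub cU])
    show "\<forall>r\<in>U. coprime (psum (d r) M) n"
    proof
      fix r assume "r \<in> U"
      hence "coprime ((\<Sum>i<M. D r i) mod int n) (int n)" using Uunit n0 by simp
      hence "coprime (int (psum (d r) M) mod int n) (int n)" unfolding ps .
      hence "coprime (int (psum (d r) M)) (int n)" using n0 by simp
      thus "coprime (psum (d r) M) n" by simp
    qed
    show "\<forall>r<n. r \<notin> U \<longrightarrow> psum (d r) M mod n = 0"
    proof (intro allI impI)
      fix r assume "r < n" "r \<notin> U"
      hence "int (psum (d r) M) mod int n = 0" unfolding ps using Zzero by simp
      thus "psum (d r) M mod n = 0" by (simp add: zmod_int[symmetric])
    qed
  qed
qed

definition ext :: "nat \<Rightarrow> (nat \<Rightarrow> nat \<Rightarrow> int) \<Rightarrow> nat \<Rightarrow> nat \<Rightarrow> int" where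
  "ext K B r i = (if i < K then B r i else if even (i - K) then int r else - int r)"

lemma ext_sum: "(\<Sum>i<K + 2 * t. ext K B r i) = (\<Sum>i<K. B r i)"
proof (induction t)
  case 0 thus ?case by (simp add: ext_def)
next
  case (Suc t)
  have "K + 2 * Suc t = Suc (Suc (K + 2 * t))" by simp
  hence a: "(\<Sum>i<K + 2 * Suc t. ext K B r i) = (\<Sum>i<K + 2 * t. ext K B r i)
      + (ext K B r (K + 2 * t) + ext K B r (Suc (K + 2 * t)))" by simp
  have b: "ext K B r (K + 2 * t) + ext K B r (Suc (K + 2 * t)) = 0"
    unfolding ext_def by simp
  show ?case using Suc a b by simp
qed

lemma ext_HWP:
  fixes B :: "nat \<Rightarrow> nat \<Rightarrow> int" and U :: "nat set"
  assumes M3: "M \<ge> 3" and n0: "n > 0" and MK: "M = K + 2 * t"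
    and Binj: "\<forall>i<K. \<forall>r<n. \<forall>s<n. B r i mod int n = B s i mod int n \<longrightarrow> r = s"
    and Usub: "U \<subseteq> {0..<n}" and cU: "card U = \<beta>"
    and Uunit: "\<forall>r\<in>U. coprime (\<Sum>i<K. B r i) (int n)"
    and Zzero: "\<forall>r<n. r \<notin> U \<longrightarrow> (\<Sum>i<K. B r i) mod int n = 0"
  shows "(n - \<beta>, \<beta>) \<in> HWP (lexV M n) (lexE M n) M (M * n)"
proof (rule int_array_HWP[OF M3 n0 _ Usub cU])
  show "\<forall>i<M. \<forall>r<n. \<forall>s<n. ext K B r i mod int n = ext K B s i mod int n \<longrightarrow> r = s"
  proof (intro allI impI)
    fix i r s assume i: "i < M" and r: "r < n" and s: "s < n"
      and eq: "ext K B r i mod int n = ext K B s i mod int n"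
    show "r = s"
    proof (cases "i < K")
      case True thus ?thesis using Binj eq r s unfolding ext_def by simp
    next
      case False
      hence "int n dvd (int r - int s) \<or> int n dvd (- int r - (- int s))"
        using eq unfolding ext_def by (auto simp: mod_eq_dvd_iff split: if_splits)
      hence "int n dvd (int r - int s)" by (metis dvd_minus_iff minus_diff_eq diff_minus_eq_add
          add.commute uminus_add_conv_diff)
      moreover have "\<bar>int r - int s\<bar> < int n" using r s by linarith
      ultimately have "int r - int s = 0" by (rule small_dvd)
      thus ?thesis by simp
    qed
  qed
  show "\<forall>r\<in>U. coprime (\<Sum>i<M. ext K B r i) (int n)" using Uunit unfolding MK ext_sum by simp
  show "\<forall>r<n. r \<notin> U \<longrightarrow> (\<Sum>i<M. ext K B r i) mod int n = 0" using Zzero unfolding MK ext_sum by simp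
qed



definition swp :: "nat \<Rightarrow> nat \<Rightarrow> nat \<Rightarrow> nat" where
  "swp a j r = (if a \<le> r \<and> r < a + 2 * j then (if even (r - a) then r + 1 else r - 1) else r)"

lemma swp_invol: "swp a j (swp a j r) = r"
  unfolding swp_def even_iff_mod_2_eq_zero by presburger

lemma swp_lt: "a + 2 * j \<le> n \<Longrightarrow> r < n \<Longrightarrow> swp a j r < n"
  unfolding swp_def even_iff_mod_2_eq_zero by presburger

lemma swp_diff: "int (swp a j r) - int r =
   (if a \<le> r \<and> r < a + 2 * j then (if even (r - a) then 1 else -1) else 0)"
  unfolding swp_def even_iff_mod_2_eq_zero by auto

lemma swp_inj: "swp a j r = swp a j s \<Longrightarrow> r = s"
  by (metis swp_invol)

lemma mod_nat_eq:
  assumes "r < n" "s < n" "int r mod int n = int s mod int n"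
  shows "r = s"
proof -
  have "int n dvd int r - int s" using assms(3) by (simp add: mod_eq_dvd_iff)
  moreover have "\<bar>int r - int s\<bar> < int n" using assms by linarith
  ultimately have "int r - int s = 0" by (rule small_dvd)
  thus ?thesis by simp
qed

lemma mod_nat_eq_neg:
  assumes "r < n" "s < n" "(- int r) mod int n = (- int s) mod int n"
  shows "r = s"
proof -
  have "int n dvd (- int r) - (- int s)" using assms(3) by (simp add: mod_eq_dvd_iff)
  hence "int n dvd int s - int r" by simp
  moreover have "\<bar>int s - int r\<bar> < int n" using assms by linarith
  ultimately have "int s - int r = 0" by (rule small_dvd)
  thus ?thesis by simp
qed

lemma coprime_pm1: "x = 1 \<or> x = -1 \<Longrightarrow> coprime (x::int) n"
  by auto

lemma even_M_HWP:
  assumes M3: "M \<ge> 3" and Me: "even M" and j1: "j \<ge> 1" and jn: "2 * j \<le> n"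
  shows "(n - 2 * j, 2 * j) \<in> HWP (lexV M n) (lexE M n) M (M * n)"
proof -
  define B where "B r (i::nat) = (if i = 0 then int r else - int (swp 0 j r))" for r i
  have n0: "n > 0" using j1 jn by linarith
  obtain k where k: "M = 2 * k" using Me by (rule evenE)
  define t where "t = k - 1"
  have MK: "M = 2 + 2 * t" unfolding t_def using k M3 by simp
  have sB: "(\<Sum>i<2. B r i) = int r - int (swp 0 j r)" for r
    unfolding B_def by (simp add: numeral_2_eq_2)
  show ?thesis
  proof (rule ext_HWP[OF M3 n0 MK])
    show "\<forall>i<2. \<forall>r<n. \<forall>s<n. B r i mod int n = B s i mod int n \<longrightarrow> r = s"
    proof (intro allI impI)
      fix i r s assume i: "i < (2::nat)" and r: "r < n" and s: "s < n"
        and eq: "B r i mod int n = B s i mod int n"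
      show "r = s"
      proof (cases "i = 0")
        case True thus ?thesis using eq mod_nat_eq r s unfolding B_def by simp
      next
        case False
        hence "(- int (swp 0 j r)) mod int n = (- int (swp 0 j s)) mod int n"
          using eq unfolding B_def by simp
        moreover have "swp 0 j r < n" "swp 0 j s < n" using swp_lt jn r s by simp_all
        ultimately have "swp 0 j r = swp 0 j s" using mod_nat_eq_neg by blast
        thus ?thesis by (rule swp_inj)
      qed
    qed
    show "{0..<2*j} \<subseteq> {0..<n}" using jn by auto
    show "card {0..<2*j} = 2 * j" by simp
    show "\<forall>r\<in>{0..<2*j}. coprime (\<Sum>i<2. B r i) (int n)"
    proof
      fix r assume "r \<in> {0..<2*j}"
      hence "int r - int (swp 0 j r) = 1 \<or> int r - int (swp 0 j r) = -1"
        using swp_diff[of 0 j r] by (auto split: if_splits)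
      thus "coprime (\<Sum>i<2. B r i) (int n)" unfolding sB by (rule coprime_pm1)
    qed
    show "\<forall>r<n. r \<notin> {0..<2*j} \<longrightarrow> (\<Sum>i<2. B r i) mod int n = 0"
    proof (intro allI impI)
      fix r assume "r < n" "r \<notin> {0..<2*j}"
      hence "int (swp 0 j r) - int r = 0" using swp_diff[of 0 j r] by simp
      thus "(\<Sum>i<2. B r i) mod int n = 0" unfolding sB by simp
    qed
  qed
qed



lemma bez_coprime:
  fixes a b x y :: int
  assumes "a * x + b * y = 1"
  shows "coprime a b"
proof (rule coprimeI)
  fix c assume "c dvd a" "c dvd b"
  hence "c dvd a * x + b * y" by simp
  thus "is_unit c" using assms by simp
qed

lemma even_dvd_even:
  fixes x :: int and m :: nat
  assumes "int (2 * m) dvd x"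
  shows "even x"
proof -
  have "2 dvd int (2 * m)" by simp
  thus ?thesis using assms by (rule dvd_trans)
qed

lemma small2:
  fixes a r s m :: nat
  assumes "a \<le> r" "r < a + m" "a \<le> s" "s < a + m"
  shows "\<bar>2 * (int s - int r)\<bar> < int (2 * m)"
  using assms by (auto simp: abs_less_iff)

lemma sum3:
  fixes B :: "nat \<Rightarrow> nat \<Rightarrow> int"
  shows "(\<Sum>i<3. B r i) = B r 0 + B r 1 + B r 2"
proof -
  have "{..<3::nat} = {0,1,2}" by auto
  thus ?thesis by (simp add: add.assoc)
qed

lemma famA:
  assumes M3: "M \<ge> 3" and Mo: "odd M" and m1: "m \<ge> 1" and nm: "n = 2 * m" and jm: "2 * j \<le> m"
  shows "(n - (m + 2 * j), m + 2 * j) \<in> HWP (lexV M n) (lexE M n) M (M * n)"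
proof -
  define c where "c r = (if r < m then - 2 * int r else - 2 * int r + 1)" for r
  define B where "B r (i::nat) = (if i = 0 then int r else if i = 1 then int (swp 0 j r) else c r)" for r i
  have n0: "n > 0" using m1 nm by simp
  obtain k where k: "M = 2 * k + 1" using Mo by (rule oddE)
  define t where "t = k - 1"
  have MK: "M = 3 + 2 * t" unfolding t_def using k M3 by simp
  have sB: "(\<Sum>i<3. B r i) = int r + int (swp 0 j r) + c r" for r
  proof -
    have "(\<Sum>i<3. B r i) = B r 0 + B r 1 + B r 2" by (rule sum3)
    also have "\<dots> = int r + int (swp 0 j r) + c r" by (simp add: B_def)
    finally show ?thesis .
  qed
  have cinj: "r = s" if r: "r < n" and s: "s < n" and eq: "c r mod int n = c s mod int n" for r s
  proof -
    have dv: "int n dvd c r - c s" using eq by (simp add: mod_eq_dvd_iff)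
    show ?thesis
    proof (cases "r < m")
      case True
      show ?thesis
      proof (cases "s < m")
        case True2: True
        hence "int n dvd 2 * (int s - int r)" using dv True unfolding c_def by (simp add: algebra_simps)
        moreover have "\<bar>2 * (int s - int r)\<bar> < int n" using small2[of 0 r m s] True True2 nm by simp
        ultimately have "2 * (int s - int r) = 0" by (rule small_dvd)
        thus ?thesis by simp
      next
        case False
        hence "int (2*m) dvd 2 * (int s - int r) - 1" using dv True nm unfolding c_def by (simp add: algebra_simps)
        hence "even (2 * (int s - int r) - 1)" by (rule even_dvd_even)
        thus ?thesis by simp
      qed
    next
      case False
      show ?thesis
      proof (cases "s < m")
        case True2: True
        hence "int (2*m) dvd 2 * (int s - int r) + 1" using dv False nm unfolding c_def by (simp add: algebra_simps)
        hence "even (2 * (int s - int r) + 1)" by (rule even_dvd_even)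
        thus ?thesis by simp
      next
        case False2: False
        hence "int n dvd 2 * (int s - int r)" using dv False unfolding c_def by (simp add: algebra_simps)
        moreover have "\<bar>2 * (int s - int r)\<bar> < int n" using small2[of m r m s] False False2 r s nm by simp
        ultimately have "2 * (int s - int r) = 0" by (rule small_dvd)
        thus ?thesis by simp
      qed
    qed
  qed
  define U where "U = {0..<2*j} \<union> {m..<n}"
  show ?thesis
  proof (rule ext_HWP[OF M3 n0 MK])
    show "\<forall>i<3. \<forall>r<n. \<forall>s<n. B r i mod int n = B s i mod int n \<longrightarrow> r = s"
    proof (intro allI impI)
      fix i r s assume i: "i < (3::nat)" and r: "r < n" and s: "s < n"
        and eq: "B r i mod int n = B s i mod int n"
      show "r = s"
      proof (cases "i = 0")
        case True thus ?thesis using eq mod_nat_eq r s unfolding B_def by simp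
      next
        case False
        show ?thesis
        proof (cases "i = 1")
          case True
          hence "int (swp 0 j r) mod int n = int (swp 0 j s) mod int n"
            using eq unfolding B_def by simp
          moreover have "swp 0 j r < n" "swp 0 j s < n" using swp_lt jm nm r s by simp_all
          ultimately have "swp 0 j r = swp 0 j s" using mod_nat_eq by blast
          thus ?thesis by (rule swp_inj)
        next
          case False2: False
          hence "c r mod int n = c s mod int n" using eq False unfolding B_def by simp
          thus ?thesis using cinj r s by blast
        qed
      qed
    qed
    show "U \<subseteq> {0..<n}" unfolding U_def using jm nm by auto
    have "card U = card {0..<2*j} + card {m..<n}" unfolding U_def
      by (rule card_Un_disjoint) (use jm in auto)
    thus "card U = m + 2 * j" using nm by simp
    show "\<forall>r\<in>U. coprime (\<Sum>i<3. B r i) (int n)"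
    proof
      fix r assume rU: "r \<in> U"
      show "coprime (\<Sum>i<3. B r i) (int n)"
      proof (cases "r < m")
        case True
        hence "r < 2 * j" using rU unfolding U_def by auto
        hence "int (swp 0 j r) - int r = 1 \<or> int (swp 0 j r) - int r = -1"
          using swp_diff[of 0 j r] by (auto split: if_splits)
        hence "(\<Sum>i<3. B r i) = 1 \<or> (\<Sum>i<3. B r i) = -1"
          unfolding sB c_def using True by auto
        thus ?thesis by (rule coprime_pm1)
      next
        case False
        hence "swp 0 j r = r" using jm unfolding swp_def by simp
        hence "(\<Sum>i<3. B r i) = 1" unfolding sB c_def using False by simp
        thus ?thesis by simp
      qed
    qed
    show "\<forall>r<n. r \<notin> U \<longrightarrow> (\<Sum>i<3. B r i) mod int n = 0"
    proof (intro allI impI)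
      fix r assume "r < n" "r \<notin> U"
      hence r: "r < m" "\<not> r < 2 * j" unfolding U_def by auto
      hence "swp 0 j r = r" unfolding swp_def by simp
      thus "(\<Sum>i<3. B r i) mod int n = 0" unfolding sB c_def using r by simp
    qed
  qed
qed




lemma swp_in: "a \<le> r \<Longrightarrow> r < a + 2 * j \<Longrightarrow> a \<le> swp a j r \<and> swp a j r < a + 2 * j"
  unfolding swp_def even_iff_mod_2_eq_zero by presburger

lemma swp_out: "\<not> (a \<le> r \<and> r < a + 2 * j) \<Longrightarrow> swp a j r = r"
  unfolding swp_def by auto

definition bB :: "nat \<Rightarrow> nat \<Rightarrow> nat \<Rightarrow> nat" where
  "bB m j r = (if r = 1 then m else if r = 2*m - 1 then 1 else if m \<le> r then r + 1 else swp 2 j r)"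

lemma bB_inj:
  assumes r: "r < 2*m" and s: "s < 2*m" and jm: "2*j+2 \<le> m" and m2: "m \<ge> 2"
    and eq: "bB m j r = bB m j s"
  shows "r = s"
proof -
  have low: "swp 2 j x < m \<and> swp 2 j x \<noteq> 1" if "x < m" "x \<noteq> 1" for x
  proof (cases "2 \<le> x \<and> x < 2 + 2 * j")
    case True thus ?thesis using swp_in[of 2 x j] jm by simp
  next
    case False thus ?thesis using swp_out[of 2 x j] that by simp
  qed
  have v: "(x = 1 \<and> bB m j x = m) \<or> (x = 2*m-1 \<and> bB m j x = 1) \<or>
      (m \<le> x \<and> x < 2*m-1 \<and> bB m j x = x+1) \<or>
      (x < m \<and> x \<noteq> 1 \<and> bB m j x = swp 2 j x \<and> swp 2 j x < m \<and> swp 2 j x \<noteq> 1)"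
    if "x < 2*m" for x
    unfolding bB_def using low[of x] that m2 by auto
  show ?thesis using v[OF r] v[OF s] eq m2 by (auto dest: swp_inj)
qed


lemma par_ne: "2 * (a::nat) = 2 * b + 1 \<Longrightarrow> False"
  by presburger

lemma par_ne2: "Suc (2 * (b::nat)) = 2 * a \<Longrightarrow> False"
  by presburger

lemma par_ne3: "2 * (a::nat) = Suc (2 * b) \<Longrightarrow> False"
  by presburger

definition cnB :: "nat \<Rightarrow> nat \<Rightarrow> nat" where
  "cnB m r = (if r = 0 then 0 else if r < m then 2*(m - r) else if r = 2*m-1 then 2*0+1 else 2*(2*m - r - 1) + 1)"

lemma cnB_inj: assumes "m \<ge> 2" "r < 2*m" "s < 2*m" "cnB m r = cnB m s" shows "r = s"
proof -
  have v: "(x = 0 \<and> cnB m x = 2*0) \<or> (0 < x \<and> x < m \<and> cnB m x = 2*(m-x)) \<or>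
     (x = 2*m-1 \<and> cnB m x = 2*0+1) \<or> (m \<le> x \<and> x < 2*m-1 \<and> cnB m x = 2*(2*m-x-1)+1)"
    if "x < 2*m" for x
    unfolding cnB_def using that by auto
  show ?thesis using v[OF assms(2)] v[OF assms(3)] assms(1,4) by (auto dest: par_ne par_ne2 par_ne3)
qed

definition cnC :: "nat \<Rightarrow> nat \<Rightarrow> nat" where
  "cnC m r = (if r = 0 then 2*(m-1) else if r = 1 then 2*0+1 else if r = 2*m-1 then 2*0
     else if r < m then 2*(m - r) else 2*(2*m - r - 1) + 1)"

lemma cnC_inj: assumes "m \<ge> 3" "r < 2*m" "s < 2*m" "cnC m r = cnC m s" shows "r = s"
proof -
  have v: "(x = 0 \<and> cnC m x = 2*(m-1)) \<or> (x = 1 \<and> cnC m x = 2*0+1) \<or> (x = 2*m-1 \<and> cnC m x = 2*0) \<or>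
     (2 \<le> x \<and> x < m \<and> cnC m x = 2*(m-x)) \<or>
     (m \<le> x \<and> x < 2*m-1 \<and> cnC m x = 2*(2*m-x-1)+1)"
    if "x < 2*m" for x
    unfolding cnC_def using that assms(1) by auto
  show ?thesis using v[OF assms(2)] v[OF assms(3)] assms(1,4) by (auto dest: par_ne par_ne2 par_ne3)
qed

lemma modI:
  fixes x :: int and y n :: nat
  assumes "x + int n * k = int y" "y < n"
  shows "x mod int n = int y"
proof -
  have "x mod int n = (x + int n * k) mod int n" by simp
  also have "\<dots> = int y" using assms by simp
  finally show ?thesis .
qed

definition cB :: "nat \<Rightarrow> nat \<Rightarrow> int" where
  "cB m r = (if r < m then - 2 * int r else if r = 2*m-1 then 1 else - 2 * int r - 1)"

lemma cB_mod: assumes "m \<ge> 2" "r < 2*m" shows "cB m r mod int (2*m) = int (cnB m r)"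
proof -
  consider "r = 0" | "0 < r \<and> r < m" | "r = 2*m-1" | "m \<le> r \<and> r < 2*m-1" using assms by linarith
  thus ?thesis
  proof cases
    case 1 thus ?thesis unfolding cB_def cnB_def using assms by simp
  next
    case 2 thus ?thesis unfolding cB_def cnB_def using assms by (intro modI[where k=1]) auto
  next
    case 3 thus ?thesis unfolding cB_def cnB_def using assms by (intro modI[where k=0]) auto
  next
    case 4 thus ?thesis unfolding cB_def cnB_def using assms by (intro modI[where k=2]) auto
  qed
qed

lemma famB:
  assumes M3: "M \<ge> 3" and Mo: "odd M" and me: "even m" and m2: "m \<ge> 2" and nm: "n = 2 * m"
    and jm: "2 * j + 2 \<le> m"
  shows "(n - (2 * j + 2), 2 * j + 2) \<in> HWP (lexV M n) (lexE M n) M (M * n)"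
proof -
  define B where "B r (i::nat) = (if i = 0 then int r else if i = 1 then int (bB m j r) else cB m r)" for r i
  have n0: "n > 0" using m2 nm by simp
  obtain k where k: "M = 2 * k + 1" using Mo by (rule oddE)
  define t where "t = k - 1"
  have MK: "M = 3 + 2 * t" unfolding t_def using k M3 by simp
  have sB: "(\<Sum>i<3. B r i) = int r + int (bB m j r) + cB m r" for r
  proof -
    have "(\<Sum>i<3. B r i) = B r 0 + B r 1 + B r 2" by (rule sum3)
    also have "\<dots> = int r + int (bB m j r) + cB m r" by (simp add: B_def)
    finally show ?thesis .
  qed
  have bBlt: "bB m j r < 2 * m" if "r < 2 * m" for r
  proof (cases "2 \<le> r \<and> r < 2 + 2 * j")
    case True thus ?thesis using swp_in[of 2 r j] jm that unfolding bB_def by auto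
  next
    case False thus ?thesis using swp_out[of 2 r j] that m2 unfolding bB_def by auto
  qed
  define U where "U = insert 1 (insert (2*m-1) {2..<2*j+2})"
  show ?thesis
  proof (rule ext_HWP[OF M3 n0 MK])
    show "\<forall>i<3. \<forall>r<n. \<forall>s<n. B r i mod int n = B s i mod int n \<longrightarrow> r = s"
    proof (intro allI impI)
      fix i r s assume i: "i < (3::nat)" and r: "r < n" and s: "s < n"
        and eq: "B r i mod int n = B s i mod int n"
      show "r = s"
      proof (cases "i = 0")
        case True thus ?thesis using eq mod_nat_eq r s unfolding B_def by simp
      next
        case False
        show ?thesis
        proof (cases "i = 1")
          case True
          hence "int (bB m j r) mod int n = int (bB m j s) mod int n"
            using eq unfolding B_def by simp
          moreover have "bB m j r < n" "bB m j s < n" using bBlt r s nm by simp_all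
          ultimately have "bB m j r = bB m j s" using mod_nat_eq by blast
          thus ?thesis using bB_inj r s jm m2 nm by blast
        next
          case False2: False
          hence "cB m r mod int n = cB m s mod int n" using eq False unfolding B_def by simp
          hence "cnB m r = cnB m s" using cB_mod[OF m2] r s nm by simp
          thus ?thesis using cnB_inj[OF m2] r s nm by blast
        qed
      qed
    qed
    show "U \<subseteq> {0..<n}" unfolding U_def using jm nm by auto
    have "1 \<notin> insert (2*m-1) {2..<2*j+2}" using m2 by auto
    moreover have "2*m-1 \<notin> {2..<2*j+2}" using jm by auto
    ultimately show "card U = 2 * j + 2" unfolding U_def by simp
    show "\<forall>r\<in>U. coprime (\<Sum>i<3. B r i) (int n)"
    proof
      fix r assume rU: "r \<in> U"
      consider "r = 1" | "r = 2*m-1" | "2 \<le> r \<and> r < 2*j+2" using rU unfolding U_def by auto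
      thus "coprime (\<Sum>i<3. B r i) (int n)"
      proof cases
        case 1
        hence S: "(\<Sum>i<3. B r i) = int m - 1" unfolding sB bB_def cB_def using m2 by simp
        obtain h where h: "m = 2 * h" using me by (rule evenE)
        have "(int m - 1) * (- (int m + 1)) + int n * int h = 1" using h nm by (simp add: algebra_simps)
        thus ?thesis unfolding S by (rule bez_coprime)
      next
        case 2
        hence S: "(\<Sum>i<3. B r i) = int n + 1" unfolding sB bB_def cB_def using m2 nm by simp
        have "(int n + 1) * 1 + int n * (-1) = 1" by simp
        thus ?thesis unfolding S by (rule bez_coprime)
      next
        case 3
        hence "r \<noteq> 1" "r \<noteq> 2*m-1" "r < m" using jm m2 by auto
        hence S: "(\<Sum>i<3. B r i) = int (swp 2 j r) - int r" unfolding sB bB_def cB_def by simp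
        have "int (swp 2 j r) - int r = 1 \<or> int (swp 2 j r) - int r = -1"
          using swp_diff[of 2 j r] 3 by (auto split: if_splits)
        thus ?thesis unfolding S by (rule coprime_pm1)
      qed
    qed
    show "\<forall>r<n. r \<notin> U \<longrightarrow> (\<Sum>i<3. B r i) mod int n = 0"
    proof (intro allI impI)
      fix r assume r: "r < n" "r \<notin> U"
      consider "r = 0" | "2*j+2 \<le> r \<and> r < m" | "m \<le> r \<and> r < 2*m-1"
        using r unfolding U_def nm by force
      hence "(\<Sum>i<3. B r i) = 0"
      proof cases
        case 1 thus ?thesis unfolding sB bB_def cB_def swp_def using m2 by simp
      next
        case 2
        hence "r \<noteq> 1" "r \<noteq> 2*m-1" "swp 2 j r = r" using m2 swp_out[of 2 r j] by auto
        thus ?thesis unfolding sB bB_def cB_def using 2 by simp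
      next
        case 3
        hence "r \<noteq> 1" "r \<noteq> 2*m-1" using m2 by auto
        thus ?thesis unfolding sB bB_def cB_def using 3 m2 by simp
      qed
      thus "(\<Sum>i<3. B r i) mod int n = 0" by simp
    qed
  qed
qed


definition bC :: "nat \<Rightarrow> nat \<Rightarrow> nat \<Rightarrow> nat" where
  "bC m j r = (if r = 0 then 1 else if r = 1 then m else if r = 2*m - 1 then 0 else if m \<le> r then r + 1 else swp 2 j r)"

lemma bC_inj:
  assumes r: "r < 2*m" and s: "s < 2*m" and jm: "2*j+3 \<le> m"
    and eq: "bC m j r = bC m j s"
  shows "r = s"
proof -
  have low: "2 \<le> swp 2 j x \<and> swp 2 j x < m" if "2 \<le> x" "x < m" for x
  proof (cases "2 \<le> x \<and> x < 2 + 2 * j")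
    case True thus ?thesis using swp_in[of 2 x j] jm by simp
  next
    case False thus ?thesis using swp_out[of 2 x j] that by simp
  qed
  have v: "(x = 0 \<and> bC m j x = 1) \<or> (x = 1 \<and> bC m j x = m) \<or> (x = 2*m-1 \<and> bC m j x = 0) \<or>
      (m \<le> x \<and> x < 2*m-1 \<and> bC m j x = x+1) \<or>
      (2 \<le> x \<and> x < m \<and> bC m j x = swp 2 j x \<and> 2 \<le> swp 2 j x \<and> swp 2 j x < m)"
    if "x < 2*m" for x
    unfolding bC_def using low[of x] that jm by auto
  show ?thesis using v[OF r] v[OF s] eq jm by (auto dest: swp_inj)
qed

definition cC :: "nat \<Rightarrow> nat \<Rightarrow> int" where
  "cC m r = (if r = 0 then -2 else if r = 1 then 1 else if r = 2*m-1 then 0 else if r < m then - 2 * int r else - 2 * int r - 1)"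

lemma cC_mod: assumes "m \<ge> 3" "r < 2*m" shows "cC m r mod int (2*m) = int (cnC m r)"
proof -
  consider "r = 0" | "r = 1" | "r = 2*m-1" | "2 \<le> r \<and> r < m" | "m \<le> r \<and> r < 2*m-1" using assms by linarith
  thus ?thesis
  proof cases
    case 1 thus ?thesis unfolding cC_def cnC_def using assms by (intro modI[where k=1]) auto
  next
    case 2 thus ?thesis unfolding cC_def cnC_def using assms by (intro modI[where k=0]) auto
  next
    case 3 thus ?thesis unfolding cC_def cnC_def using assms by (intro modI[where k=0]) auto
  next
    case 4 thus ?thesis unfolding cC_def cnC_def using assms by (intro modI[where k=1]) auto
  next
    case 5 thus ?thesis unfolding cC_def cnC_def using assms by (intro modI[where k=2]) auto
  qed
qed

lemma famC:
  assumes M3: "M \<ge> 3" and Mo: "odd M" and mo: "odd m" and m3: "m \<ge> 3" and nm: "n = 2 * m"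
    and jm: "2 * j + 3 \<le> m"
  shows "(n - (2 * j + 3), 2 * j + 3) \<in> HWP (lexV M n) (lexE M n) M (M * n)"
proof -
  define B where "B r (i::nat) = (if i = 0 then int r else if i = 1 then int (bC m j r) else cC m r)" for r i
  have n0: "n > 0" using m3 nm by simp
  obtain k where k: "M = 2 * k + 1" using Mo by (rule oddE)
  define t where "t = k - 1"
  have MK: "M = 3 + 2 * t" unfolding t_def using k M3 by simp
  have sB: "(\<Sum>i<3. B r i) = int r + int (bC m j r) + cC m r" for r
  proof -
    have "(\<Sum>i<3. B r i) = B r 0 + B r 1 + B r 2" by (rule sum3)
    also have "\<dots> = int r + int (bC m j r) + cC m r" by (simp add: B_def)
    finally show ?thesis .
  qed
  have bClt: "bC m j r < 2 * m" if "r < 2 * m" for r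
  proof (cases "2 \<le> r \<and> r < 2 + 2 * j")
    case True thus ?thesis using swp_in[of 2 r j] jm that unfolding bC_def by auto
  next
    case False thus ?thesis using swp_out[of 2 r j] that m3 unfolding bC_def by auto
  qed
  define U where "U = insert 0 (insert 1 (insert (2*m-1) {2..<2*j+2}))"
  show ?thesis
  proof (rule ext_HWP[OF M3 n0 MK])
    show "\<forall>i<3. \<forall>r<n. \<forall>s<n. B r i mod int n = B s i mod int n \<longrightarrow> r = s"
    proof (intro allI impI)
      fix i r s assume i: "i < (3::nat)" and r: "r < n" and s: "s < n"
        and eq: "B r i mod int n = B s i mod int n"
      show "r = s"
      proof (cases "i = 0")
        case True thus ?thesis using eq mod_nat_eq r s unfolding B_def by simp
      next
        case False
        show ?thesis
        proof (cases "i = 1")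
          case True
          hence "int (bC m j r) mod int n = int (bC m j s) mod int n"
            using eq unfolding B_def by simp
          moreover have "bC m j r < n" "bC m j s < n" using bClt r s nm by simp_all
          ultimately have "bC m j r = bC m j s" using mod_nat_eq by blast
          thus ?thesis using bC_inj r s jm nm by blast
        next
          case False2: False
          hence "cC m r mod int n = cC m s mod int n" using eq False unfolding B_def by simp
          hence "cnC m r = cnC m s" using cC_mod[OF m3] r s nm by simp
          thus ?thesis using cnC_inj[OF m3] r s nm by blast
        qed
      qed
    qed
    show "U \<subseteq> {0..<n}" unfolding U_def using jm nm by auto
    have "0 \<notin> insert 1 (insert (2*m-1) {2..<2*j+2})" using m3 by auto
    moreover have "1 \<notin> insert (2*m-1) {2..<2*j+2}" using m3 by auto
    moreover have "2*m-1 \<notin> {2..<2*j+2}" using jm by auto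
    ultimately show "card U = 2 * j + 3" unfolding U_def by simp
    show "\<forall>r\<in>U. coprime (\<Sum>i<3. B r i) (int n)"
    proof
      fix r assume rU: "r \<in> U"
      consider "r = 0" | "r = 1" | "r = 2*m-1" | "2 \<le> r \<and> r < 2*j+2" using rU unfolding U_def by auto
      thus "coprime (\<Sum>i<3. B r i) (int n)"
      proof cases
        case 1
        hence S: "(\<Sum>i<3. B r i) = -1" unfolding sB bC_def cC_def using m3 by simp
        show ?thesis unfolding S by simp
      next
        case 2
        hence S: "(\<Sum>i<3. B r i) = int m + 2" unfolding sB bC_def cC_def using m3 by simp
        obtain h where h: "m = 2 * h + 1" using mo by (rule oddE)
        have "(int m + 2) * (int h + 1) + int m * (- (int h + 2)) = 1" using h by (simp add: algebra_simps)
        hence c1: "coprime (int m + 2) (int m)" by (rule bez_coprime)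
        have c2: "coprime (int m + 2) 2" using mo by simp
        have "int n = 2 * int m" using nm by simp
        thus ?thesis unfolding S using c1 c2 by simp
      next
        case 3
        hence S: "(\<Sum>i<3. B r i) = int n - 1" unfolding sB bC_def cC_def using m3 nm by simp
        have "(int n - 1) * (-1) + int n * 1 = 1" by simp
        thus ?thesis unfolding S by (rule bez_coprime)
      next
        case 4
        hence "r \<noteq> 0" "r \<noteq> 1" "r \<noteq> 2*m-1" "r < m" using jm m3 by auto
        hence S: "(\<Sum>i<3. B r i) = int (swp 2 j r) - int r" unfolding sB bC_def cC_def by simp
        have "int (swp 2 j r) - int r = 1 \<or> int (swp 2 j r) - int r = -1"
          using swp_diff[of 2 j r] 4 by (auto split: if_splits)
        thus ?thesis unfolding S by (rule coprime_pm1)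
      qed
    qed
    show "\<forall>r<n. r \<notin> U \<longrightarrow> (\<Sum>i<3. B r i) mod int n = 0"
    proof (intro allI impI)
      fix r assume r: "r < n" "r \<notin> U"
      consider "2*j+2 \<le> r \<and> r < m" | "m \<le> r \<and> r < 2*m-1"
        using r unfolding U_def nm by force
      hence "(\<Sum>i<3. B r i) = 0"
      proof cases
        case 1
        hence "r \<noteq> 0" "r \<noteq> 1" "r \<noteq> 2*m-1" "swp 2 j r = r" using m3 swp_out[of 2 r j] by auto
        thus ?thesis unfolding sB bC_def cC_def using 1 by simp
      next
        case 2
        hence "r \<noteq> 0" "r \<noteq> 1" "r \<noteq> 2*m-1" using m3 by auto
        thus ?thesis unfolding sB bC_def cC_def using 2 m3 by simp
      qed
      thus "(\<Sum>i<3. B r i) mod int n = 0" by simp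
    qed
  qed
qed

theorem mainTheorem5:
  fixes n M \<beta> :: nat
  assumes "n \<ge> 2" and "even n" and "M \<ge> 3"
    and "0 < \<beta>" and "\<beta> \<le> n"
    and "\<beta> mod 2 = (M * n div 2) mod 2"
    and "M * n mod 4 = 2 \<and> n > 2 \<longrightarrow> \<beta> \<noteq> 1"
  shows "(n - \<beta>, \<beta>) \<in> HWP (lexV M n) (lexE M n) M (M * n)"
proof -
  obtain m where nm: "n = 2 * m" using assms(2) by (rule evenE)
  have m1: "m \<ge> 1" using assms(1) nm by simp
  have Mn: "M * n div 2 = M * m" using nm by simp
  have par: "\<beta> mod 2 = (M * m) mod 2" using assms(6) Mn by simp
  show ?thesis
  proof (cases "even M")
    case True
    hence "even (M * m)" by simp
    hence "even \<beta>" using par by (metis even_iff_mod_2_eq_zero)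
    then obtain j where j: "\<beta> = 2 * j" by (rule evenE)
    have "j \<ge> 1" using j assms(4) by simp
    moreover have "2 * j \<le> n" using j assms(5) by simp
    ultimately show ?thesis unfolding j by (rule even_M_HWP[OF assms(3) True])
  next
    case Mo: False
    have e1: "even \<beta> \<longleftrightarrow> even (M * m)" using par by (simp add: even_iff_mod_2_eq_zero)
    have e2: "even (M * m) \<longleftrightarrow> even m" using Mo by simp
    have eb: "even \<beta> \<longleftrightarrow> even m" using e1 e2 by simp
    show ?thesis
    proof (cases "m \<le> \<beta>")
      case True
      have "even (\<beta> - m)" using eb True by (simp add: even_diff_nat)
      then obtain j where j: "\<beta> - m = 2 * j" by (rule evenE)
      have b: "\<beta> = m + 2 * j" using j True by simp
      have "2 * j \<le> m" using j assms(5) nm by simp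
      thus ?thesis unfolding b by (rule famA[OF assms(3) Mo m1 nm])
    next
      case False
      show ?thesis
      proof (cases "even m")
        case True
        hence "even \<beta>" using eb by simp
        then obtain j' where j': "\<beta> = 2 * j'" by (rule evenE)
        define j where "j = j' - 1"
        have b: "\<beta> = 2 * j + 2" unfolding j_def using j' assms(4) by simp
        have "2 * j + 2 \<le> m" using b False by simp
        moreover have "m \<ge> 2" using b False by simp
        ultimately show ?thesis unfolding b using famB[OF assms(3) Mo True _ nm] by blast
      next
        case mo: False
        have bo: "odd \<beta>" using eb mo by simp
        have "odd (M * m)" using Mo mo by simp
        then obtain q where q: "M * m = 2 * q + 1" by (rule oddE)
        have "M * n = 4 * q + 2" using q nm by simp
        moreover have "(4 * q + 2) mod 4 = (2::nat)" by presburger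
        ultimately have "M * n mod 4 = 2" by simp
        moreover have "n > 2" using False assms(4) nm by simp
        ultimately have "\<beta> \<noteq> 1" using assms(7) by blast
        hence b3: "\<beta> \<ge> 3" using bo assms(4) by presburger
        have "even (\<beta> - 3)" using bo b3 by presburger
        then obtain j where j: "\<beta> - 3 = 2 * j" by (rule evenE)
        have b: "\<beta> = 2 * j + 3" using j b3 by simp
        have "2 * j + 3 \<le> m" using b False by simp
        moreover have "m \<ge> 3" using b False by simp
        ultimately show ?thesis unfolding b using famC[OF assms(3) Mo mo _ nm] by blast
      qed
    qed
  qed
qed

end
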